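(* Let $i\in\{1,\dots,d\}$ and $I\subseteq\{1,\dots,d\}$ with $|I|=i$, and let $L_I=\operatorname{span}\{e_k:k\in I\}$. Then, restricting to the coordinates in $I$, $T_d\cap L_I=S\big(\tfrac{1}{d-i+1},1,\dots,1\big)\subseteq\mathbb{R}^I$, where the weight vector has $i+1$ entries.
   Context: $T_d=\operatorname{conv}(-\mathbb{1}_d,e_1,\dots,e_d)\subseteq\mathbb{R}^d$ is the standard terminal simplex. For $\omega=(\omega_0,\dots,\omega_n)\in\mathbb{R}^{n+1}_{>0}$, $S(\omega)=\operatorname{conv}(-\omega_0\mathbb{1}_n,\omega_1e_1,\dots,\omega_ne_n)\subseteq\mathbb{R}^n$. *)

theory Defs
  imports "HOL-Analysis.Analysis"
begin

definition terminal_simplex :: "(real ^ 'n::finite) set" where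
  "terminal_simplex = convex hull (insert (- 1) {axis k 1 | k. True})"

definition coord_subspace :: "'n::finite set \<Rightarrow> (real ^ 'n) set" where
  "coord_subspace I = span {axis k 1 | k. k \<in> I}"

definition ones_on :: "'n::finite set \<Rightarrow> real ^ 'n" where
  "ones_on I = (\<chi> k. if k \<in> I then 1 else 0)"

text \<open>Weighted simplex S(w_0, (w_k)_{k in I}) = conv(-w_0 1_I, w_k e_k (k in I)) in R^I,
  realised inside the coordinate subspace L_I of R^d (R^I identified with L_I).\<close>
definition weighted_simplex_on ::
    "'n::finite set \<Rightarrow> real \<Rightarrow> ('n \<Rightarrow> real) \<Rightarrow> (real ^ 'n) set" where
  "weighted_simplex_on I w0 w =
     convex hull (insert (- (w0 *\<^sub>R ones_on I)) {axis k (w k) | k. k \<in> I})"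

end

theory Submission imports Defs begin

lemma hull_idx:
  fixes f :: "'i \<Rightarrow> 'a::real_vector"
  assumes fin: "finite J"
  shows "convex hull (insert p (f ` J)) =
    {y. \<exists>l0 l. 0 \<le> l0 \<and> (\<forall>k\<in>J. 0 \<le> l k) \<and> l0 + sum l J = 1 \<and>
         y = l0 *\<^sub>R p + (\<Sum>k\<in>J. l k *\<^sub>R f k)}" (is "_ = ?R")
proof
  show "convex hull (insert p (f ` J)) \<subseteq> ?R"
  proof (rule hull_minimal)
    show "insert p (f ` J) \<subseteq> ?R"
    proof
      fix y assume "y \<in> insert p (f ` J)"
      then show "y \<in> ?R"
      proof
        assume "y = p" then show ?thesis
          by (intro CollectI exI[of _ 1] exI[of _ "\<lambda>_. 0"]) auto
      next
        assume "y \<in> f ` J"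
        then obtain k where k: "k \<in> J" "y = f k" by auto
        have e: "(\<Sum>j\<in>J. (if j = k then 1 else 0) *\<^sub>R f j) = (\<Sum>j\<in>J. if j = k then f j else 0)"
          by (rule sum.cong) auto
        show ?thesis
          by (intro CollectI exI[of _ 0] exI[of _ "\<lambda>j. if j = k then 1 else 0"])
             (use k fin e in \<open>auto simp: sum.delta'\<close>)
      qed
    qed
    show "convex ?R"
    proof (rule convexI)
      fix x y :: 'a and u v :: real
      assume x: "x \<in> ?R" and y: "y \<in> ?R" and uv: "0 \<le> u" "0 \<le> v" "u + v = 1"
      from x obtain a0 a where a: "0 \<le> a0" "\<forall>k\<in>J. 0 \<le> a k" "a0 + sum a J = 1"
        "x = a0 *\<^sub>R p + (\<Sum>k\<in>J. a k *\<^sub>R f k)" by auto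
      from y obtain b0 b where b: "0 \<le> b0" "\<forall>k\<in>J. 0 \<le> b k" "b0 + sum b J = 1"
        "y = b0 *\<^sub>R p + (\<Sum>k\<in>J. b k *\<^sub>R f k)" by auto
      show "u *\<^sub>R x + v *\<^sub>R y \<in> ?R"
      proof (intro CollectI exI[of _ "u * a0 + v * b0"] exI[of _ "\<lambda>k. u * a k + v * b k"] conjI ballI)
        show "0 \<le> u * a0 + v * b0" using a b uv by simp
        show "0 \<le> u * a k + v * b k" if "k \<in> J" for k using a b uv that by simp
        have "u * a0 + v * b0 + (\<Sum>k\<in>J. u * a k + v * b k) = u * (a0 + sum a J) + v * (b0 + sum b J)"
          by (simp add: sum.distrib sum_distrib_left algebra_simps)
        then show "u * a0 + v * b0 + (\<Sum>k\<in>J. u * a k + v * b k) = 1" using a b uv by simp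
        show "u *\<^sub>R x + v *\<^sub>R y = (u * a0 + v * b0) *\<^sub>R p + (\<Sum>k\<in>J. (u * a k + v * b k) *\<^sub>R f k)"
          by (simp add: a(4) b(4) scaleR_add_left scaleR_add_right sum.distrib scaleR_right.sum algebra_simps)
      qed
    qed
  qed
next
  show "?R \<subseteq> convex hull (insert p (f ` J))"
  proof
    fix y assume "y \<in> ?R"
    then obtain l0 l where l: "0 \<le> l0" "\<forall>k\<in>J. 0 \<le> l k" "l0 + sum l J = 1"
        "y = l0 *\<^sub>R p + (\<Sum>k\<in>J. l k *\<^sub>R f k)" by auto
    define A where "A = insert None (Some ` J)"
    define u where "u = (\<lambda>o'. case o' of None \<Rightarrow> l0 | Some k \<Rightarrow> l k)"
    define g where "g = (\<lambda>o'. case o' of None \<Rightarrow> p | Some k \<Rightarrow> f k)"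
    have inj: "inj_on Some J" by simp
    have s1: "sum u A = l0 + sum l J"
      unfolding A_def using fin by (simp add: sum.reindex[OF inj] u_def o_def)
    have s2: "(\<Sum>o'\<in>A. u o' *\<^sub>R g o') = y"
      unfolding A_def using fin l(4) by (simp add: sum.reindex[OF inj] u_def g_def o_def)
    have "(\<Sum>o'\<in>A. u o' *\<^sub>R g o') \<in> convex hull (insert p (f ` J))"
    proof (rule convex_sum)
      show "sum u A = 1" using s1 l(3) by simp
    qed (use fin l in \<open>auto simp: A_def u_def g_def hull_inc\<close>)
    then show "y \<in> convex hull (insert p (f ` J))" using s2 by simp
  qed
qed

lemma sum_axis_comp:
  "(\<Sum>k\<in>A. c k *\<^sub>R axis k (1::real)) $ j = (if j \<in> A then c j else 0)"
proof -
  have "(\<Sum>k\<in>A. c k *\<^sub>R axis k (1::real)) $ j = (\<Sum>k\<in>A. if k = j then c k else 0)"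
    unfolding sum_component by (rule sum.cong) (auto simp: axis_def)
  also have "\<dots> = (if j \<in> A then c j else 0)"
    by (simp add: sum.delta')
  finally show ?thesis .
qed

lemma span_coord:
  assumes "x \<in> coord_subspace (I::'n::finite set)" "j \<notin> I"
  shows "x $ j = 0"
proof -
  have "coord_subspace I \<subseteq> {x::real^'n. \<forall>j. j \<notin> I \<longrightarrow> x $ j = 0}"
    unfolding coord_subspace_def
  proof (rule span_minimal)
    show "{axis k 1 |k. k \<in> I} \<subseteq> {x::real^'n. \<forall>j. j \<notin> I \<longrightarrow> x $ j = 0}"
      by (auto simp: axis_def)
    show "subspace {x::real^'n. \<forall>j. j \<notin> I \<longrightarrow> x $ j = 0}"
      by (auto simp: subspace_def)
  qed
  then show ?thesis using assms by auto
qed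

theorem corollary5p5:
  fixes I :: "'n::finite set" and i :: nat
  assumes "i \<in> {1..CARD('n)}" and "card I = i"
  shows "terminal_simplex \<inter> coord_subspace I =
         weighted_simplex_on I (1 / real (CARD('n) - i + 1)) (\<lambda>_. 1)"
proof -
  define m where "m = CARD('n) - i"
  define w0 where "w0 = 1 / real (CARD('n) - i + 1)"
  have w0: "w0 = 1 / (real m + 1)" unfolding w0_def m_def by simp
  have cm: "card (- I) = m" unfolding m_def using assms by (simp add: Compl_eq_Diff_UNIV card_Diff_subset)
  have T: "terminal_simplex = convex hull (insert (- 1) ((\<lambda>k. axis k (1::real)) ` UNIV))"
    unfolding terminal_simplex_def by (rule arg_cong[where f="\<lambda>S. convex hull (insert _ S)"]) auto
  have S: "weighted_simplex_on I w0 (\<lambda>_. 1) = convex hull (insert (- (w0 *\<^sub>R ones_on I)) ((\<lambda>k. axis k (1::real)) ` I))"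
    unfolding weighted_simplex_on_def by (rule arg_cong[where f="\<lambda>S. convex hull (insert _ S)"]) auto
  have TT: "terminal_simplex = {y. \<exists>l0 l. 0 \<le> l0 \<and> (\<forall>k\<in>UNIV. 0 \<le> l k) \<and> l0 + sum l UNIV = 1 \<and>
         y = l0 *\<^sub>R (- 1) + (\<Sum>k\<in>UNIV. l k *\<^sub>R axis k (1::real))}"
    unfolding T by (rule hull_idx) simp
  have SS: "weighted_simplex_on I w0 (\<lambda>_. 1) = {y. \<exists>l0 l. 0 \<le> l0 \<and> (\<forall>k\<in>I. 0 \<le> l k) \<and> l0 + sum l I = 1 \<and>
         y = l0 *\<^sub>R (- (w0 *\<^sub>R ones_on I)) + (\<Sum>k\<in>I. l k *\<^sub>R axis k (1::real))}"
    unfolding S by (rule hull_idx) simp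
  have "terminal_simplex \<inter> coord_subspace I = weighted_simplex_on I w0 (\<lambda>_. 1)"
  proof
    show "terminal_simplex \<inter> coord_subspace I \<subseteq> weighted_simplex_on I w0 (\<lambda>_. 1)"
    proof
      fix x assume x: "x \<in> terminal_simplex \<inter> coord_subspace I"
      then obtain l0 l where l: "0 \<le> l0" "\<forall>k. 0 \<le> l k" "l0 + sum l UNIV = 1"
        "x = l0 *\<^sub>R (- 1) + (\<Sum>k\<in>UNIV. l k *\<^sub>R axis k (1::real))" unfolding TT by auto
      have xc: "x $ j = l j - l0" for j unfolding l(4) vector_add_component sum_axis_comp by simp
      have out: "l j = l0" if "j \<notin> I" for j using span_coord[of x I j] x that xc by auto
      have "sum l UNIV = sum l I + sum l (- I)"
        using sum.subset_diff[of I UNIV l] by (simp add: Compl_eq_Diff_UNIV)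
      also have "sum l (- I) = real m * l0" using out cm by simp
      finally have sl: "l0 * (real m + 1) + sum l I = 1" using l(3) by (simp add: algebra_simps)
      show "x \<in> weighted_simplex_on I w0 (\<lambda>_. 1)"
        unfolding SS
      proof (intro CollectI exI[of _ "l0 * (real m + 1)"] exI[of _ l] conjI ballI)
        show "0 \<le> l0 * (real m + 1)" using l by simp
        show "0 \<le> l k" for k using l by simp
        show "l0 * (real m + 1) + sum l I = 1" by (rule sl)
        show "x = (l0 * (real m + 1)) *\<^sub>R - (w0 *\<^sub>R ones_on I) + (\<Sum>k\<in>I. l k *\<^sub>R axis k 1)"
          unfolding vec_eq_iff
        proof
          fix j
          show "x $ j = ((l0 * (real m + 1)) *\<^sub>R - (w0 *\<^sub>R ones_on I) + (\<Sum>k\<in>I. l k *\<^sub>R axis k 1)) $ j"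
            using out[of j] unfolding xc vector_add_component sum_axis_comp by (simp add: ones_on_def w0 field_simps)
        qed
      qed
    qed
  next
    show "weighted_simplex_on I w0 (\<lambda>_. 1) \<subseteq> terminal_simplex \<inter> coord_subspace I"
      unfolding S
    proof (rule hull_minimal)
      show "convex (terminal_simplex \<inter> coord_subspace I)"
        unfolding terminal_simplex_def coord_subspace_def
        by (intro convex_Int convex_convex_hull subspace_imp_convex subspace_span)
      have ax: "axis k 1 \<in> terminal_simplex" for k
        unfolding terminal_simplex_def by (rule hull_inc) auto
      have axs: "axis k 1 \<in> coord_subspace I" if "k \<in> I" for k
        unfolding coord_subspace_def by (rule span_base) (use that in auto)
      have p1: "- (w0 *\<^sub>R ones_on I) \<in> terminal_simplex"
        unfolding TT
      proof (intro CollectI exI[of _ w0] exI[of _ "\<lambda>k. if k \<in> I then 0 else w0"] conjI ballI)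
        show "0 \<le> w0" using w0 by simp
        show "0 \<le> (if k \<in> I then 0 else w0)" for k using w0 by simp
        have "(\<Sum>k\<in>UNIV. if k \<in> I then 0 else w0) = (\<Sum>k\<in>-I. w0)"
          by (simp add: sum.If_cases Compl_eq_Diff_UNIV)
        also have "\<dots> = real m * w0" using cm by simp
        finally have sw: "(\<Sum>k\<in>UNIV. if k \<in> I then 0 else w0) = real m * w0" .
        have "w0 * (real m + 1) = 1" using w0 by simp
        then show "w0 + (\<Sum>k\<in>UNIV. if k \<in> I then 0 else w0) = 1" unfolding sw by (simp add: algebra_simps)
        show "- (w0 *\<^sub>R ones_on I) = w0 *\<^sub>R - 1 + (\<Sum>k\<in>UNIV. (if k \<in> I then 0 else w0) *\<^sub>R axis k 1)"
          unfolding vec_eq_iff vector_add_component sum_axis_comp by (simp add: ones_on_def)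
      qed
      have p2: "- (w0 *\<^sub>R ones_on I) \<in> coord_subspace I"
      proof -
        have "ones_on I = (\<Sum>k\<in>I. 1 *\<^sub>R axis k (1::real))"
          unfolding vec_eq_iff vector_add_component sum_axis_comp by (simp add: ones_on_def)
        also have "\<dots> \<in> coord_subspace I"
          unfolding coord_subspace_def
          by (intro span_sum span_mul) (use axs in \<open>auto simp: coord_subspace_def\<close>)
        finally show ?thesis unfolding coord_subspace_def
          by (intro span_neg span_mul) 
      qed
      show "insert (- (w0 *\<^sub>R ones_on I)) ((\<lambda>k. axis k 1) ` I) \<subseteq> terminal_simplex \<inter> coord_subspace I"
        using ax axs p1 p2 by auto
    qed
  qed
  then show ?thesis unfolding w0_def .
qed

end
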